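(* Under the setting and assumptions in the context, let $N_{AH}=\Pr(R=0,Y=1\mid Z=0)-\Pr(R=0,Y=1\mid Z=1)$ and suppose $N_{AH}\ge 0$ and $\max_{z}\Pr(R=0,Y=1\mid Z=z)>0$. Then $$\frac{N_{AH}}{\min_z\Pr(Y=1\mid Z=z)}\ \le\ APCE_{AH}\ \le\ \frac{N_{AH}}{\max_z\Pr(R=0,Y=1\mid Z=z)},$$ where maxima and minima are over $z\in\{0,1\}$.
   Context: Units are drawn from a population (a probability space). Each unit has a binary assignment $Z\in\{0,1\}$ with $0<\Pr(Z=1)<1$, binary potential recommendations $R(0),R(1)\in\{0,1\}$, and binary potential outcomes $Y(0),Y(1)\in\{0,1\}$ indexed by the recommendation only (exclusion restriction). Observed quantities are $R=R(Z)$ and $Y=Y(R(Z))$. Assumptions: (Randomization) $Z$ is independent of $(R(0),R(1),Y(0),Y(1))$; (Monotonicity) $Y(1)\ge Y(0)$ almost surely. Always High stratum $AH=\{Y(0)=Y(1)=1\}$; $APCE_{AH}=E[R(1)-R(0)\mid AH]$. *)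

theory Defs
  imports "HOL-Probability.Probability"
begin

text \<open>Binary variables are modelled as bool-valued random variables (True = 1, False = 0).\<close>

definition cond_prob :: "'a measure \<Rightarrow> 'a set \<Rightarrow> 'a set \<Rightarrow> real" where
  "cond_prob M A B = measure M (A \<inter> B) / measure M B"

definition cond_exp_event :: "'a measure \<Rightarrow> ('a \<Rightarrow> real) \<Rightarrow> 'a set \<Rightarrow> real" where
  "cond_exp_event M f B = (\<integral>\<omega>. f \<omega> * indicator B \<omega> \<partial>M) / measure M B"

definition obsR :: "('a \<Rightarrow> bool) \<Rightarrow> ('a \<Rightarrow> bool) \<Rightarrow> ('a \<Rightarrow> bool) \<Rightarrow> 'a \<Rightarrow> bool" where
  "obsR Z R0 R1 \<omega> = (if Z \<omega> then R1 \<omega> else R0 \<omega>)"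

definition obsY :: "('a \<Rightarrow> bool) \<Rightarrow> ('a \<Rightarrow> bool) \<Rightarrow> ('a \<Rightarrow> bool)
    \<Rightarrow> ('a \<Rightarrow> bool) \<Rightarrow> ('a \<Rightarrow> bool) \<Rightarrow> 'a \<Rightarrow> bool" where
  "obsY Z R0 R1 Y0 Y1 \<omega> = (if obsR Z R0 R1 \<omega> then Y1 \<omega> else Y0 \<omega>)"

definition AH :: "'a measure \<Rightarrow> ('a \<Rightarrow> bool) \<Rightarrow> ('a \<Rightarrow> bool) \<Rightarrow> 'a set" where
  "AH M Y0 Y1 = {\<omega> \<in> space M. Y0 \<omega> \<and> Y1 \<omega>}"

definition APCE_AH :: "'a measure \<Rightarrow> ('a \<Rightarrow> bool) \<Rightarrow> ('a \<Rightarrow> bool) \<Rightarrow> ('a \<Rightarrow> bool) \<Rightarrow> ('a \<Rightarrow> bool) \<Rightarrow> real" where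
  "APCE_AH M R0 R1 Y0 Y1 =
     cond_exp_event M (\<lambda>\<omega>. of_bool (R1 \<omega>) - of_bool (R0 \<omega>)) (AH M Y0 Y1)"

definition pR0Y1 :: "'a measure \<Rightarrow> ('a \<Rightarrow> bool) \<Rightarrow> ('a \<Rightarrow> bool) \<Rightarrow> ('a \<Rightarrow> bool)
    \<Rightarrow> ('a \<Rightarrow> bool) \<Rightarrow> ('a \<Rightarrow> bool) \<Rightarrow> bool \<Rightarrow> real" where
  "pR0Y1 M Z R0 R1 Y0 Y1 z =
     cond_prob M {\<omega> \<in> space M. \<not> obsR Z R0 R1 \<omega> \<and> obsY Z R0 R1 Y0 Y1 \<omega>}
                 {\<omega> \<in> space M. Z \<omega> = z}"

definition pY1 :: "'a measure \<Rightarrow> ('a \<Rightarrow> bool) \<Rightarrow> ('a \<Rightarrow> bool) \<Rightarrow> ('a \<Rightarrow> bool)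
    \<Rightarrow> ('a \<Rightarrow> bool) \<Rightarrow> ('a \<Rightarrow> bool) \<Rightarrow> bool \<Rightarrow> real" where
  "pY1 M Z R0 R1 Y0 Y1 z =
     cond_prob M {\<omega> \<in> space M. obsY Z R0 R1 Y0 Y1 \<omega>} {\<omega> \<in> space M. Z \<omega> = z}"

end

theory Submission
  imports Defs
begin

theorem mainTheorem7:
  fixes M :: "'a measure"
    and Z R0 R1 Y0 Y1 :: "'a \<Rightarrow> bool"
  assumes "prob_space M"
    and meas_Z: "Z \<in> measurable M (count_space UNIV)"
    and meas_R0: "R0 \<in> measurable M (count_space UNIV)"
    and meas_R1: "R1 \<in> measurable M (count_space UNIV)"
    and meas_Y0: "Y0 \<in> measurable M (count_space UNIV)"
    and meas_Y1: "Y1 \<in> measurable M (count_space UNIV)"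
    and randomization: "\<And>(A :: bool set) (S :: (bool \<times> bool \<times> bool \<times> bool) set).
          measure M {\<omega> \<in> space M. Z \<omega> \<in> A \<and> (R0 \<omega>, R1 \<omega>, Y0 \<omega>, Y1 \<omega>) \<in> S}
        = measure M {\<omega> \<in> space M. Z \<omega> \<in> A}
          * measure M {\<omega> \<in> space M. (R0 \<omega>, R1 \<omega>, Y0 \<omega>, Y1 \<omega>) \<in> S}"
    and Z_pos: "0 < measure M {\<omega> \<in> space M. Z \<omega>}"
    and Z_lt1: "measure M {\<omega> \<in> space M. Z \<omega>} < 1"
    and monotonicity: "AE \<omega> in M. Y0 \<omega> \<longrightarrow> Y1 \<omega>"
    and N_nonneg: "pR0Y1 M Z R0 R1 Y0 Y1 False - pR0Y1 M Z R0 R1 Y0 Y1 True \<ge> 0"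
    and max_pos: "max (pR0Y1 M Z R0 R1 Y0 Y1 False) (pR0Y1 M Z R0 R1 Y0 Y1 True) > 0"
  shows "(pR0Y1 M Z R0 R1 Y0 Y1 False - pR0Y1 M Z R0 R1 Y0 Y1 True)
           / min (pY1 M Z R0 R1 Y0 Y1 False) (pY1 M Z R0 R1 Y0 Y1 True)
           \<le> APCE_AH M R0 R1 Y0 Y1
       \<and> APCE_AH M R0 R1 Y0 Y1
           \<le> (pR0Y1 M Z R0 R1 Y0 Y1 False - pR0Y1 M Z R0 R1 Y0 Y1 True)
             / max (pR0Y1 M Z R0 R1 Y0 Y1 False) (pR0Y1 M Z R0 R1 Y0 Y1 True)"
proof -
  interpret prob_space M by fact
  note [measurable] = meas_Z meas_R0 meas_R1 meas_Y0 meas_Y1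
  have Zt: "measure M {\<omega> \<in> space M. Z \<omega> = True} > 0" using Z_pos by simp
  have "measure M {\<omega> \<in> space M. Z \<omega> = False} = 1 - measure M {\<omega> \<in> space M. Z \<omega>}"
  proof -
    have "{\<omega> \<in> space M. Z \<omega> = False} = space M - {\<omega> \<in> space M. Z \<omega>}" by auto
    then show ?thesis by (simp add: prob_compl)
  qed
  then have Zf: "measure M {\<omega> \<in> space M. Z \<omega> = False} > 0" using Z_lt1 by simp
  have Zpos: "measure M {\<omega> \<in> space M. Z \<omega> = z} > 0" for z
    using Zt Zf by (cases z) auto
  have cp: "measure M {\<omega> \<in> space M. Z \<omega> = z \<and> f (R0 \<omega>, R1 \<omega>, Y0 \<omega>, Y1 \<omega>)}
      / measure M {\<omega> \<in> space M. Z \<omega> = z} = measure M {\<omega> \<in> space M. f (R0 \<omega>, R1 \<omega>, Y0 \<omega>, Y1 \<omega>)}"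
    for z f
  proof -
    have "measure M {\<omega> \<in> space M. Z \<omega> \<in> {z} \<and> (R0 \<omega>, R1 \<omega>, Y0 \<omega>, Y1 \<omega>) \<in> {v. f v}}
        = measure M {\<omega> \<in> space M. Z \<omega> \<in> {z}}
          * measure M {\<omega> \<in> space M. (R0 \<omega>, R1 \<omega>, Y0 \<omega>, Y1 \<omega>) \<in> {v. f v}}"
      by (rule randomization)
    then show ?thesis using Zpos[of z] by simp
  qed
  define A0 where "A0 = measure M {\<omega> \<in> space M. Y0 \<omega> \<and> Y1 \<omega> \<and> \<not> R0 \<omega>}"
  define A1 where "A1 = measure M {\<omega> \<in> space M. Y0 \<omega> \<and> Y1 \<omega> \<and> \<not> R1 \<omega>}"
  define B0 where "B0 = measure M {\<omega> \<in> space M. Y0 \<omega> \<and> Y1 \<omega> \<and> R0 \<omega>}"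
  define B1 where "B1 = measure M {\<omega> \<in> space M. Y0 \<omega> \<and> Y1 \<omega> \<and> R1 \<omega>}"
  define H where "H = measure M (AH M Y0 Y1)"
  have AHs[measurable]: "AH M Y0 Y1 \<in> sets M" unfolding AH_def by measurable
  have H0: "H = A0 + B0"
  proof -
    have "AH M Y0 Y1 = {\<omega> \<in> space M. Y0 \<omega> \<and> Y1 \<omega> \<and> \<not> R0 \<omega>} \<union> {\<omega> \<in> space M. Y0 \<omega> \<and> Y1 \<omega> \<and> R0 \<omega>}"
      unfolding AH_def by auto
    moreover have "measure M ({\<omega> \<in> space M. Y0 \<omega> \<and> Y1 \<omega> \<and> \<not> R0 \<omega>} \<union> {\<omega> \<in> space M. Y0 \<omega> \<and> Y1 \<omega> \<and> R0 \<omega>})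
      = A0 + B0" unfolding A0_def B0_def by (rule finite_measure_Union) auto
    ultimately show ?thesis unfolding H_def by simp
  qed
  have H1: "H = A1 + B1"
  proof -
    have "AH M Y0 Y1 = {\<omega> \<in> space M. Y0 \<omega> \<and> Y1 \<omega> \<and> \<not> R1 \<omega>} \<union> {\<omega> \<in> space M. Y0 \<omega> \<and> Y1 \<omega> \<and> R1 \<omega>}"
      unfolding AH_def by auto
    moreover have "measure M ({\<omega> \<in> space M. Y0 \<omega> \<and> Y1 \<omega> \<and> \<not> R1 \<omega>} \<union> {\<omega> \<in> space M. Y0 \<omega> \<and> Y1 \<omega> \<and> R1 \<omega>})
      = A1 + B1" unfolding A1_def B1_def by (rule finite_measure_Union) auto
    ultimately show ?thesis unfolding H_def by simp
  qed
  have pF: "pR0Y1 M Z R0 R1 Y0 Y1 False = A0"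
  proof -
    have "pR0Y1 M Z R0 R1 Y0 Y1 False = measure M {\<omega> \<in> space M. \<not> R0 \<omega> \<and> Y0 \<omega>}"
      proof -
        have e: "{\<omega> \<in> space M. \<not> obsR Z R0 R1 \<omega> \<and> obsY Z R0 R1 Y0 Y1 \<omega>} \<inter> {\<omega> \<in> space M. Z \<omega> = False} = {\<omega> \<in> space M. Z \<omega> = False \<and> (\<lambda>(r0,r1,y0,y1). \<not> r0 \<and> y0) (R0 \<omega>, R1 \<omega>, Y0 \<omega>, Y1 \<omega>)}"
          by (auto simp: obsR_def obsY_def split: if_splits)
        show ?thesis unfolding pR0Y1_def cond_prob_def e cp by simp
      qed
    also have "\<dots> = A0" unfolding A0_def
      by (rule measure_eq_AE) (use monotonicity in auto)
    finally show ?thesis .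
  qed
  have pT: "pR0Y1 M Z R0 R1 Y0 Y1 True = A1"
  proof -
    have "pR0Y1 M Z R0 R1 Y0 Y1 True = measure M {\<omega> \<in> space M. \<not> R1 \<omega> \<and> Y0 \<omega>}"
      proof -
        have e: "{\<omega> \<in> space M. \<not> obsR Z R0 R1 \<omega> \<and> obsY Z R0 R1 Y0 Y1 \<omega>} \<inter> {\<omega> \<in> space M. Z \<omega> = True} = {\<omega> \<in> space M. Z \<omega> = True \<and> (\<lambda>(r0,r1,y0,y1). \<not> r1 \<and> y0) (R0 \<omega>, R1 \<omega>, Y0 \<omega>, Y1 \<omega>)}"
          by (auto simp: obsR_def obsY_def split: if_splits)
        show ?thesis unfolding pR0Y1_def cond_prob_def e cp by simp
      qed
    also have "\<dots> = A1" unfolding A1_def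
      by (rule measure_eq_AE) (use monotonicity in auto)
    finally show ?thesis .
  qed
  have qY: "pY1 M Z R0 R1 Y0 Y1 z \<ge> H" for z
  proof -
    have "pY1 M Z R0 R1 Y0 Y1 z = measure M {\<omega> \<in> space M. (if (if z then R1 \<omega> else R0 \<omega>) then Y1 \<omega> else Y0 \<omega>)}"
      proof -
        have e: "{\<omega> \<in> space M. obsY Z R0 R1 Y0 Y1 \<omega>} \<inter> {\<omega> \<in> space M. Z \<omega> = z} = {\<omega> \<in> space M. Z \<omega> = z \<and> (\<lambda>(r0,r1,y0,y1). (if (if z then r1 else r0) then y1 else y0)) (R0 \<omega>, R1 \<omega>, Y0 \<omega>, Y1 \<omega>)}"
          by (auto simp: obsR_def obsY_def split: if_splits)
        show ?thesis unfolding pY1_def cond_prob_def e cp by simp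
      qed
    also have "\<dots> \<ge> H" unfolding H_def AH_def
      by (rule finite_measure_mono) auto
    finally show ?thesis .
  qed
  have AP: "APCE_AH M R0 R1 Y0 Y1 = (B1 - B0) / H"
  proof -
    have "(\<lambda>\<omega>. (of_bool (R1 \<omega>) - of_bool (R0 \<omega>)) * indicator (AH M Y0 Y1) \<omega>)
      = (\<lambda>\<omega>. indicator {\<omega> \<in> space M. Y0 \<omega> \<and> Y1 \<omega> \<and> R1 \<omega>} \<omega>
             - indicator {\<omega> \<in> space M. Y0 \<omega> \<and> Y1 \<omega> \<and> R0 \<omega>} \<omega> :: real)"
      by (auto simp: AH_def indicator_def fun_eq_iff)
    then have "(\<integral>\<omega>. (of_bool (R1 \<omega>) - of_bool (R0 \<omega>)) * indicator (AH M Y0 Y1) \<omega> \<partial>M) = B1 - B0"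
      unfolding B0_def B1_def
      by (simp add: Bochner_Integration.integral_diff[OF integrable_real_indicator integrable_real_indicator] emeasure_eq_measure)
    then show ?thesis unfolding APCE_AH_def cond_exp_event_def H_def by simp
  qed
  have A0H: "A0 \<le> H" and A1H: "A1 \<le> H" using H0 H1 measure_nonneg[of M "{\<omega> \<in> space M. Y0 \<omega> \<and> Y1 \<omega> \<and> R0 \<omega>}"]
      measure_nonneg[of M "{\<omega> \<in> space M. Y0 \<omega> \<and> Y1 \<omega> \<and> R1 \<omega>}"]
    unfolding B0_def B1_def by linarith+
  have mp: "max A0 A1 > 0" using max_pos pF pT by simp
  have Hp: "H > 0" using mp A0H A1H by linarith
  have N: "A0 - A1 \<ge> 0" using N_nonneg pF pT by simp
  have APv: "APCE_AH M R0 R1 Y0 Y1 = (A0 - A1) / H" using AP H0 H1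
    by (smt (verit))
  have mn: "H \<le> min (pY1 M Z R0 R1 Y0 Y1 False) (pY1 M Z R0 R1 Y0 Y1 True)" using qY by simp
  have l: "(A0 - A1) / min (pY1 M Z R0 R1 Y0 Y1 False) (pY1 M Z R0 R1 Y0 Y1 True) \<le> (A0 - A1) / H"
    by (rule divide_left_mono[OF mn N]) (use Hp mn in auto)
  have u: "(A0 - A1) / H \<le> (A0 - A1) / max A0 A1"
    by (rule divide_left_mono[OF _ N]) (use Hp mp A0H A1H in auto)
  show ?thesis unfolding pF pT APv using l u by simp
qed

end
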